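(* Consider the method U-CS$(\hat x_0,\chi,\lambda_0,\bar\varepsilon)$ described in the context, with $(\hat x_0,\chi,\lambda_0,\bar\varepsilon)\in\mathrm{dom}\, h\times[0,1)\times\mathbb{R}_{++}\times\mathbb{R}_{++}$. Then: (a) $\{\lambda_k\}$ is non-increasing; (b) for every $k\ge1$ (for which $\hat x_k$ is generated), \[ \hat x_k=\mathrm{argmin}_{u\in\mathbb{R}^n}\left\{\ell_f(u;\hat x_{k-1})+h(u)+\frac1{2\lambda_k}\|u-\hat x_{k-1}\|^2\right\},\quad f(\hat x_k)-\ell_f(\hat x_k;\hat x_{k-1})+\frac{\chi-1}{2\lambda_k}\|\hat x_k-\hat x_{k-1}\|^2\le\frac{(1-\chi)\bar\varepsilon}2, \] \[ \lambda_k\ge\min\left\{\frac{(1-\chi)^2\bar\varepsilon}{8M_f^2+2\bar\varepsilon L_f},\ \lambda_0\right\}; \] (c) with $\hat y_k=\hat x_k$ and $\hat\Gamma_k(\cdot)=\ell_f(\cdot;\hat x_{k-1})+h(\cdot)$, for every $k\ge1$ one has $\hat\Gamma_k\le\phi$, $\hat x_k=\mathrm{argmin}_u\{\hat\Gamma_k(u)+\frac1{2\lambda_k}\|u-\hat x_{k-1}\|^2\}$ and $\phi(\hat y_k)+\frac{\chi}{2\lambda_k}\|\hat y_k-\hat x_{k-1}\|^2-\min_u\{\hat\Gamma_k(u)+\frac1{2\lambda_k}\|u-\hat x_{k-1}\|^2\}\le(1-\chi)\bar\varepsilon/2$; moreover $\lambda_k\ge\underline\lambda$ for all $k$, with $\underline\lambda$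 the lower bound in (b).
   Context: Setting: $f,h:\mathbb{R}^n\to\mathbb{R}\cup\{+\infty\}$ are proper lsc convex with $\mathrm{dom}\, h\subseteq\mathrm{dom}\, f$, $\phi=f+h$, $\phi_*=\inf\phi$, attained on a nonempty set. A subgradient oracle $f':\mathrm{dom}\, h\to\mathbb{R}^n$, $f'(x)\in\partial f(x)$, satisfies $\|f'(x)-f'(y)\|\le2M_f+L_f\|x-y\|$ for all $x,y\in\mathrm{dom}\, h$, for some $M_f,L_f\ge0$. $\ell_f(u;x):=f(x)+\langle f'(x),u-x\rangle$. Method U-CS$(\hat x_0,\chi,\lambda_0,\bar\varepsilon)$: Step 0: $\lambda=\lambda_0$, $k=1$. Step 1: $x=\mathrm{argmin}_u\{\ell_f(u;\hat x_{k-1})+h(u)+\frac1{2\lambda}\|u-\hat x_{k-1}\|^2\}$; if $\phi(x)-\phi_*\le\bar\varepsilon$ stop. Step 2: if $f(x)-\ell_f(x;\hat x_{k-1})-(1-\chi)\|x-\hat x_{k-1}\|^2/(2\lambda)\le(1-\chi)\bar\varepsilon/2$ fails, set $\lambda=\lambda/2$ and go to Step 1; else set $\lambda_k=\lambda$, $\hat x_k=x$, $k\leftarrow k+1$, go to Step 1. *)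

theory Defs
  imports "HOL-Analysis.Analysis"
begin

definition edom :: "('a \<Rightarrow> ereal) \<Rightarrow> 'a set" where
  "edom f = {x. f x < \<infinity>}"

definition proper_fun :: "('a \<Rightarrow> ereal) \<Rightarrow> bool" where
  "proper_fun f \<longleftrightarrow> (\<forall>x. f x \<noteq> -\<infinity>) \<and> (\<exists>x. f x < \<infinity>)"

definition lsc_fun :: "('a::topological_space \<Rightarrow> ereal) \<Rightarrow> bool" where
  "lsc_fun f \<longleftrightarrow> (\<forall>c::real. closed {x. f x \<le> ereal c})"

definition econvex :: "('a::real_vector \<Rightarrow> ereal) \<Rightarrow> bool" where
  "econvex f \<longleftrightarrow> (\<forall>x y t. 0 < t \<and> t < 1 \<longrightarrow>
      f ((1 - t) *\<^sub>R x + t *\<^sub>R y) \<le> ereal (1 - t) * f x + ereal t * f y)"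

definition lin_f :: "('a::real_inner \<Rightarrow> ereal) \<Rightarrow> ('a \<Rightarrow> 'a) \<Rightarrow> 'a \<Rightarrow> 'a \<Rightarrow> ereal" where
  "lin_f f f' u x = f x + ereal (inner (f' x) (u - x))"

definition cs_obj :: "('a::real_inner \<Rightarrow> ereal) \<Rightarrow> ('a \<Rightarrow> 'a) \<Rightarrow> ('a \<Rightarrow> ereal)
    \<Rightarrow> 'a \<Rightarrow> real \<Rightarrow> 'a \<Rightarrow> ereal" where
  "cs_obj f f' h xc lam u = lin_f f f' u xc + h u + ereal ((norm (u - xc))\<^sup>2 / (2 * lam))"

definition cs_prox :: "('a::real_inner \<Rightarrow> ereal) \<Rightarrow> ('a \<Rightarrow> 'a) \<Rightarrow> ('a \<Rightarrow> ereal)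
    \<Rightarrow> 'a \<Rightarrow> real \<Rightarrow> 'a" where
  "cs_prox f f' h xc lam = (THE x. \<forall>u. cs_obj f f' h xc lam x \<le> cs_obj f f' h xc lam u)"

definition ucs_stop :: "('a \<Rightarrow> ereal) \<Rightarrow> ('a \<Rightarrow> ereal) \<Rightarrow> real \<Rightarrow> 'a \<Rightarrow> bool" where
  "ucs_stop f h eps x \<longleftrightarrow> (f x + h x) - (INF u. f u + h u) \<le> ereal eps"

definition ucs_test :: "('a::real_inner \<Rightarrow> ereal) \<Rightarrow> ('a \<Rightarrow> 'a) \<Rightarrow> real \<Rightarrow> real
    \<Rightarrow> 'a \<Rightarrow> real \<Rightarrow> 'a \<Rightarrow> bool" where
  "ucs_test f f' chi eps xc lam x \<longleftrightarrow>
     f x - lin_f f f' x xc - ereal ((1 - chi) * (norm (x - xc))\<^sup>2 / (2 * lam))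
       \<le> ereal ((1 - chi) * eps / 2)"

text \<open>States reached at (entry to) Step 1 of U-CS(x0, chi, lam0, eps):
  ucs_reach ... k lam xc  means that k iterates have been accepted so far,
  the current prox centre is  xc = hat x_k  and the current stepsize is lam.\<close>
inductive ucs_reach :: "('a::real_inner \<Rightarrow> ereal) \<Rightarrow> ('a \<Rightarrow> 'a) \<Rightarrow> ('a \<Rightarrow> ereal)
    \<Rightarrow> 'a \<Rightarrow> real \<Rightarrow> real \<Rightarrow> real \<Rightarrow> nat \<Rightarrow> real \<Rightarrow> 'a \<Rightarrow> bool"
  for f f' h x0 chi lam0 eps where
  init: "ucs_reach f f' h x0 chi lam0 eps 0 lam0 x0"
| halve: "ucs_reach f f' h x0 chi lam0 eps k lam xc \<Longrightarrow>
          \<not> ucs_stop f h eps (cs_prox f f' h xc lam) \<Longrightarrow>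
          \<not> ucs_test f f' chi eps xc lam (cs_prox f f' h xc lam) \<Longrightarrow>
          ucs_reach f f' h x0 chi lam0 eps k (lam / 2) xc"
| accept: "ucs_reach f f' h x0 chi lam0 eps k lam xc \<Longrightarrow>
          \<not> ucs_stop f h eps (cs_prox f f' h xc lam) \<Longrightarrow>
          ucs_test f f' chi eps xc lam (cs_prox f f' h xc lam) \<Longrightarrow>
          ucs_reach f f' h x0 chi lam0 eps (Suc k) lam (cs_prox f f' h xc lam)"

text \<open>ucs_gen ... k lamk xk : the method generates  lambda_k = lamk  and
  hat x_k = xk  (for k = 0 these are the inputs lam0 and x0).\<close>
definition ucs_gen :: "('a::real_inner \<Rightarrow> ereal) \<Rightarrow> ('a \<Rightarrow> 'a) \<Rightarrow> ('a \<Rightarrow> ereal)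
    \<Rightarrow> 'a \<Rightarrow> real \<Rightarrow> real \<Rightarrow> real \<Rightarrow> nat \<Rightarrow> real \<Rightarrow> 'a \<Rightarrow> bool" where
  "ucs_gen f f' h x0 chi lam0 eps k lamk xk \<longleftrightarrow>
     (k = 0 \<and> lamk = lam0 \<and> xk = x0) \<or>
     (\<exists>j xc. k = Suc j \<and> ucs_reach f f' h x0 chi lam0 eps j lamk xc \<and>
        \<not> ucs_stop f h eps (cs_prox f f' h xc lamk) \<and>
        ucs_test f f' chi eps xc lamk (cs_prox f f' h xc lamk) \<and>
        xk = cs_prox f f' h xc lamk)"

text \<open>Lower bound  min{(1-chi)^2 eps/(8 M^2 + 2 eps L), lam0}, with the
  convention that the first entry is +infinity when the denominator is 0.\<close>
definition lam_lower :: "real \<Rightarrow> real \<Rightarrow> real \<Rightarrow> real \<Rightarrow> real \<Rightarrow> real" where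
  "lam_lower chi eps M L lam0 =
     (if 8 * M\<^sup>2 + 2 * eps * L = 0 then lam0
      else min ((1 - chi)\<^sup>2 * eps / (8 * M\<^sup>2 + 2 * eps * L)) lam0)"

end

theory Submission
  imports Defs
begin


lemma epi_closed:
  fixes h :: "'a::topological_space \<Rightarrow> ereal"
  assumes "lsc_fun h"
  shows "closed {p::'a \<times> real. h (fst p) \<le> ereal (snd p)}"
proof -
  have "open (- {p::'a \<times> real. h (fst p) \<le> ereal (snd p)})"
  proof (subst open_subopen, intro ballI)
    fix p assume "p \<in> - {p::'a \<times> real. h (fst p) \<le> ereal (snd p)}"
    then have lt: "ereal (snd p) < h (fst p)" by auto
    then obtain c where c: "ereal (snd p) < ereal c" "ereal c < h (fst p)"
      using ereal_dense2 by blast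
    let ?T = "(- {x. h x \<le> ereal c}) \<times> {..<c}"
    have "open ?T" using assms unfolding lsc_fun_def
      by (intro open_Times) (auto simp: open_Compl)
    moreover have "p \<in> ?T" using c by (cases p) auto
    moreover have "?T \<subseteq> - {p::'a \<times> real. h (fst p) \<le> ereal (snd p)}"
    proof
      fix q assume "q \<in> ?T"
      then show "q \<in> - {p::'a \<times> real. h (fst p) \<le> ereal (snd p)}"
        by (cases q) (auto simp: not_le intro: less_trans[of _ "ereal c"])
    qed
    ultimately show "\<exists>T. open T \<and> p \<in> T \<and> T \<subseteq> - {p::'a \<times> real. h (fst p) \<le> ereal (snd p)}"
      by blast
  qed
  then show ?thesis by (simp add: closed_def)
qed

lemma proper_finite:
  assumes "proper_fun h" "h x < \<infinity>"
  shows "h x = ereal (real_of_ereal (h x))"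
  using assms unfolding proper_fun_def by (cases "h x") auto

lemma econvex_le:
  fixes h :: "'a::real_vector \<Rightarrow> ereal"
  assumes "econvex h" "proper_fun h" "h x \<le> ereal r" "h y \<le> ereal s" "0 \<le> t" "t \<le> 1"
  shows "h ((1 - t) *\<^sub>R x + t *\<^sub>R y) \<le> ereal ((1 - t) * r + t * s)"
proof (cases "t = 0 \<or> t = 1")
  case True
  then show ?thesis using assms by auto
next
  case False
  then have t: "0 < t" "t < 1" using assms by auto
  have "h ((1 - t) *\<^sub>R x + t *\<^sub>R y) \<le> ereal (1 - t) * h x + ereal t * h y"
    using assms(1) t unfolding econvex_def by blast
  also have "\<dots> \<le> ereal (1 - t) * ereal r + ereal t * ereal s"
    using t assms(3,4) by (intro add_mono ereal_mult_left_mono) auto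
  finally show ?thesis by simp
qed

lemma affine_minorant:
  fixes h :: "'a::euclidean_space \<Rightarrow> ereal"
  assumes hp: "proper_fun h" and hl: "lsc_fun h" and hc: "econvex h"
  shows "\<exists>a b. \<forall>x. ereal (inner a x + b) \<le> h x"
proof -
  let ?E = "{p::'a \<times> real. h (fst p) \<le> ereal (snd p)}"
  have cl: "closed ?E" by (rule epi_closed[OF hl])
  have cv: "convex ?E"
    unfolding convex_alt
  proof (intro ballI allI impI)
    fix p q :: "'a \<times> real" and u :: real
    assume "p \<in> ?E" "q \<in> ?E" "0 \<le> u \<and> u \<le> 1"
    then show "(1 - u) *\<^sub>R p + u *\<^sub>R q \<in> ?E"
      using econvex_le[OF hc hp, of "fst p" "snd p" "fst q" "snd q" u] by (cases p, cases q) auto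
  qed
  obtain x0 where x0: "h x0 < \<infinity>" using hp unfolding proper_fun_def by auto
  define y0 where "y0 = real_of_ereal (h x0)"
  have hx0: "h x0 = ereal y0" using proper_finite[OF hp x0] y0_def by simp
  have "(x0, y0 - 1) \<notin> ?E" using hx0 by simp
  from separating_hyperplane_closed_point[OF cv cl this]
  obtain p b where pb: "inner p (x0, y0 - 1) < b" "\<forall>z\<in>?E. b < inner p z" by blast
  obtain a \<beta> where p: "p = (a, \<beta>)" by (cases p)
  have "(x0, y0) \<in> ?E" using hx0 by simp
  then have "b < inner a x0 + \<beta> * y0" using pb(2) p by (auto simp: inner_Pair)
  moreover have "inner a x0 + \<beta> * (y0 - 1) < b" using pb(1) p by (simp add: inner_Pair)
  ultimately have bpos: "\<beta> > 0" by (simp add: algebra_simps)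
  have "ereal (inner (- a /\<^sub>R \<beta>) x + b / \<beta>) \<le> h x" for x
  proof (cases "h x < \<infinity>")
    case True
    define y where "y = real_of_ereal (h x)"
    have hx: "h x = ereal y" using proper_finite[OF hp True] y_def by simp
    then have "(x, y) \<in> ?E" by simp
    then have "b < inner a x + \<beta> * y" using pb(2) p by (auto simp: inner_Pair)
    then have "inner (- a /\<^sub>R \<beta>) x + b / \<beta> \<le> y" using bpos
      by (simp add: field_simps)
    then show ?thesis using hx by simp
  next
    case False
    then show ?thesis by simp
  qed
  then show ?thesis by blast
qed

lemma lsc_attains_min:
  fixes G :: "'a::heine_borel \<Rightarrow> ereal"
  assumes cl: "\<And>c. closed {u. G u \<le> ereal c}" and bd: "bounded {u. G u \<le> ereal m}"
    and x1: "G x1 \<le> ereal m"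
  shows "\<exists>x. \<forall>u. G x \<le> G u"
proof -
  let ?S = "{u. G u \<le> ereal m}"
  have cS: "compact ?S" using cl bd by (simp add: compact_eq_bounded_closed)
  let ?I = "{c. (\<exists>y. G y < ereal c) \<and> c \<le> m}"
  have "?S \<inter> (\<Inter>c\<in>?I. {u. G u \<le> ereal c}) \<noteq> {}"
  proof (rule compact_imp_fip_image[OF cS])
    show "closed {u. G u \<le> ereal c}" for c by (rule cl)
    fix I' assume I': "finite I'" "I' \<subseteq> ?I"
    show "?S \<inter> (\<Inter>c\<in>I'. {u. G u \<le> ereal c}) \<noteq> {}"
    proof (cases "I' = {}")
      case True then show ?thesis using x1 by auto
    next
      case False
      define c where "c = Min I'"
      have "c \<in> I'" using I' False c_def by simp
      then obtain y where y: "G y < ereal c" "c \<le> m" using I' by auto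
      have "\<forall>d\<in>I'. c \<le> d" using I' c_def by simp
      then have "y \<in> ?S \<inter> (\<Inter>c\<in>I'. {u. G u \<le> ereal c})"
        using y by (auto intro: order.trans[OF less_imp_le[OF y(1)]])
      then show ?thesis by blast
    qed
  qed
  then obtain x where x: "x \<in> ?S" "\<forall>c\<in>?I. G x \<le> ereal c" by blast
  show ?thesis
  proof (rule exI, rule allI, rule ccontr)
    fix u assume "\<not> G x \<le> G u"
    then have "G u < G x" by simp
    then obtain c where c: "G u < ereal c" "ereal c < G x" using ereal_dense2 by blast
    have "G x \<le> ereal m" using x(1) by simp
    with c(2) have "ereal c < ereal m" by (rule less_le_trans)
    then have "c \<in> ?I" using c by auto
    then show False using x(2) c(2) by auto
  qed
qed

lemma mid_norm:
  fixes a b :: "'a::real_inner"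
  shows "(norm ((1/2) *\<^sub>R (a + b)))\<^sup>2 = ((norm a)\<^sup>2 + (norm b)\<^sup>2) / 2 - (norm (a - b))\<^sup>2 / 4"
  apply (simp add: power2_norm_eq_inner inner_add_left inner_add_right inner_diff_left
      inner_diff_right inner_commute algebra_simps)
  apply (simp add: field_simps)
  done


lemma prox_exists:
  fixes h :: "'a::euclidean_space \<Rightarrow> ereal"
    and c :: real and v z :: 'a
  assumes hp: "proper_fun h" and hl: "lsc_fun h" and hc: "econvex h" and lam: "lam > 0"
  defines "g \<equiv> \<lambda>u. c + inner v (u - z) + (norm (u - z))\<^sup>2 / (2 * lam)"
  shows "\<exists>x. \<forall>u. h x + ereal (g x) \<le> h u + ereal (g u)"
proof -
  define G where "G = (\<lambda>u. h u + ereal (g u))"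
  let ?E = "{p::'a \<times> real. h (fst p) \<le> ereal (snd p)}"
  have cl: "closed {u. G u \<le> ereal d}" for d
  proof -
    have eq: "{u. G u \<le> ereal d} = (\<lambda>u. (u, d - g u)) -` ?E"
    proof (intro set_eqI)
      fix u show "u \<in> {u. G u \<le> ereal d} \<longleftrightarrow> u \<in> (\<lambda>u. (u, d - g u)) -` ?E"
        unfolding G_def by (cases "h u") (auto simp: algebra_simps)
    qed
    have "closed ((\<lambda>u. (u, d - g u)) -` ?E)"
      by (rule continuous_closed_vimage[OF epi_closed[OF hl]]) (use lam in \<open>auto simp: g_def intro!: continuous_intros\<close>)
    then show ?thesis using eq by simp
  qed
  obtain a b where ab: "\<And>x. ereal (inner a x + b) \<le> h x" using affine_minorant[OF hp hl hc] by blast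
  obtain x1 where x1: "h x1 < \<infinity>" using hp unfolding proper_fun_def by auto
  define m where "m = real_of_ereal (h x1) + g x1"
  have Gx1: "G x1 = ereal m" using proper_finite[OF hp x1] unfolding G_def m_def
    by (metis plus_ereal.simps(1))
  define W where "W = norm a + norm v"
  define D where "D = \<bar>m - inner a z - b - c\<bar>"
  define R where "R = max 1 (2 * lam * (D + W))"
  have sub: "{u. G u \<le> ereal m} \<subseteq> cball z R"
  proof
    fix u assume "u \<in> {u. G u \<le> ereal m}"
    then have "G u \<le> ereal m" by simp
    moreover have "ereal (inner a u + b + g u) \<le> G u" unfolding G_def
      using add_mono[OF ab[of u] order.refl[of "ereal (g u)"]] by simp
    ultimately have le: "inner a u + b + g u \<le> m" by (metis ereal_less_eq(3) order.trans)
    define \<rho> where "\<rho> = norm (u - z)"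
    have ia: "inner a u \<ge> inner a z - norm a * \<rho>"
    proof -
      have "inner (-a) (u - z) \<le> norm (-a) * \<rho>" unfolding \<rho>_def by (rule norm_cauchy_schwarz)
      then show ?thesis by (simp add: inner_diff_right)
    qed
    have iv: "inner v (u - z) \<ge> - norm v * \<rho>"
    proof -
      have "inner (-v) (u - z) \<le> norm (-v) * \<rho>" unfolding \<rho>_def by (rule norm_cauchy_schwarz)
      then show ?thesis by simp
    qed
    have key: "\<rho>\<^sup>2 / (2 * lam) \<le> D + W * \<rho>"
      using le ia iv unfolding g_def D_def W_def \<rho>_def[symmetric] by (auto simp: algebra_simps)
    have "\<rho> \<le> R"
    proof (cases "\<rho> \<le> 1")
      case True then show ?thesis unfolding R_def by simp
    next
      case False
      have "\<rho>\<^sup>2 \<le> 2 * lam * (D + W * \<rho>)" using key lam by (simp add: field_simps)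
      also have "\<dots> \<le> 2 * lam * (D * \<rho> + W * \<rho>)"
        using False lam D_def by (intro mult_left_mono add_right_mono) (auto intro: mult_le_cancel_left1[THEN iffD2])
      finally have "\<rho> * \<rho> \<le> (2 * lam * (D + W)) * \<rho>" by (simp add: power2_eq_square algebra_simps)
      then have "\<rho> \<le> 2 * lam * (D + W)" using False by simp
      then show ?thesis unfolding R_def by simp
    qed
    then show "u \<in> cball z R" unfolding \<rho>_def by (simp add: dist_norm norm_minus_commute)
  qed
  have bd: "bounded {u. G u \<le> ereal m}" by (rule bounded_subset[OF bounded_cball sub])
  from lsc_attains_min[OF cl bd, of x1] Gx1 show ?thesis unfolding G_def by simp
qed

lemma min_in_dom:
  fixes h :: "'a \<Rightarrow> ereal"
  assumes hp: "proper_fun h" and mx: "\<forall>u. h x + ereal (g x) \<le> h u + ereal (g u)"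
  shows "h x < \<infinity>"
proof -
  obtain x1 where x1: "h x1 < \<infinity>" using hp unfolding proper_fun_def by auto
  have "h x1 + ereal (g x1) < \<infinity>" using x1 by simp
  then have "h x + ereal (g x) < \<infinity>" using mx le_less_trans by blast
  then show ?thesis by (cases "h x") auto
qed

lemma prox_unique:
  fixes h :: "'a::euclidean_space \<Rightarrow> ereal"
    and c :: real and v z :: 'a
  assumes hp: "proper_fun h" and hc: "econvex h" and lam: "lam > 0"
  defines "g \<equiv> \<lambda>u. c + inner v (u - z) + (norm (u - z))\<^sup>2 / (2 * lam)"
  assumes mx: "\<forall>u. h x + ereal (g x) \<le> h u + ereal (g u)"
    and my: "\<forall>u. h y + ereal (g y) \<le> h u + ereal (g u)"
  shows "x = y"
proof (rule ccontr)
  assume ne: "x \<noteq> y"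
  define hx where "hx = real_of_ereal (h x)"
  define hy where "hy = real_of_ereal (h y)"
  have hx: "h x = ereal hx" using proper_finite[OF hp min_in_dom[OF hp mx]] hx_def by simp
  have hy: "h y = ereal hy" using proper_finite[OF hp min_in_dom[OF hp my]] hy_def by simp
  have eq: "hx + g x = hy + g y" using mx my hx hy
    by (metis antisym plus_ereal.simps(1) ereal.inject)
  define w where "w = (1 - 1/2) *\<^sub>R x + (1/2::real) *\<^sub>R y"
  have hw: "h w \<le> ereal ((1 - 1/2) * hx + 1/2 * hy)" unfolding w_def
    by (rule econvex_le[OF hc hp]) (auto simp: hx hy)
  have wz: "w - z = (1/2) *\<^sub>R ((x - z) + (y - z))" unfolding w_def by (simp add: algebra_simps flip: scaleR_add_left)
  have n1: "(norm (w - z))\<^sup>2 = ((norm (x - z))\<^sup>2 + (norm (y - z))\<^sup>2) / 2 - (norm (x - y))\<^sup>2 / 4"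
    unfolding wz using mid_norm[of "x - z" "y - z"] by simp
  have n2: "inner v (w - z) = (inner v (x - z) + inner v (y - z)) / 2"
    unfolding wz by (simp add: inner_add_right)
  have gw: "g w = (g x + g y) / 2 - (norm (x - y))\<^sup>2 / (8 * lam)"
    unfolding g_def n1 n2 using lam by (simp add: field_simps)
  have "norm (x - y) > 0" using ne by simp
  then have pos: "(norm (x - y))\<^sup>2 / (8 * lam) > 0" using lam by simp
  have "h w + ereal (g w) \<le> ereal ((1 - 1/2) * hx + 1/2 * hy + g w)"
    using add_mono[OF hw order.refl[of "ereal (g w)"]] by simp
  also have "(1 - 1/2) * hx + 1/2 * hy + g w < hx + g x" using gw pos eq by (simp add: field_simps)
  finally have "h w + ereal (g w) < h x + ereal (g x)" using hx by simp
  then show False using mx by (meson not_le)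
qed

lemma quad_bound:
  fixes a lam eps M L t :: real
  assumes a: "0 < a" "a \<le> 1" and lam: "lam > 0" and eps: "eps > 0" and M: "M \<ge> 0" and L: "L \<ge> 0"
    and t: "t \<ge> 0" and c: "lam * (4 * M\<^sup>2 + eps * L) \<le> a\<^sup>2 * eps"
  shows "2 * M * t + L / 2 * t\<^sup>2 - a * t\<^sup>2 / (2 * lam) \<le> a * eps / 2"
proof -
  define k where "k = a - lam * L"
  have "lam * eps * L \<le> a\<^sup>2 * eps" using c lam M by (simp add: algebra_simps) (smt (verit) mult_nonneg_nonneg zero_le_power2 mult_pos_pos)
  then have "lam * L \<le> a\<^sup>2" using eps by (simp add: mult.commute)
  moreover have "a\<^sup>2 \<le> a" using a by (simp add: power2_eq_square mult_left_le)
  ultimately have k0: "k \<ge> 0" unfolding k_def by simp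
  have main: "k * t\<^sup>2 - 4 * lam * M * t + a * eps * lam \<ge> 0"
  proof (cases "k = 0")
    case True
    then have "lam * L = a" unfolding k_def by simp
    then have "lam * eps * L = a * eps" by (simp add: algebra_simps)
    moreover have "a * eps \<ge> a\<^sup>2 * eps" using a eps \<open>a\<^sup>2 \<le> a\<close> by (simp add: mult_right_mono)
    moreover have "lam * 4 * M\<^sup>2 + lam * eps * L \<le> a\<^sup>2 * eps" using c by (simp add: algebra_simps)
    ultimately have "lam * 4 * M\<^sup>2 \<le> 0" by linarith
    then have "M = 0" using lam M by (simp add: mult_le_0_iff)
    then show ?thesis using True a eps lam by simp
  next
    case False
    then have kp: "k > 0" using k0 by simp
    have "a * eps * lam * L \<le> eps * lam * L" using a eps lam L by (simp add: mult_right_mono mult_nonneg_nonneg)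
    then have "a * eps * lam * L \<le> lam * eps * L" by (simp add: mult_ac)
    moreover have "lam * eps * L + 4 * lam * M\<^sup>2 \<le> a\<^sup>2 * eps" using c by (simp add: algebra_simps)
    ultimately have s1: "a * eps * lam * L + 4 * lam * M\<^sup>2 \<le> a\<^sup>2 * eps" by linarith
    have "lam * (a * eps * lam * L + 4 * lam * M\<^sup>2) \<le> lam * (a\<^sup>2 * eps)"
      using s1 lam by (intro mult_left_mono) auto
    then have q: "k * a * eps * lam - 4 * lam\<^sup>2 * M\<^sup>2 \<ge> 0"
      unfolding k_def by (simp add: power2_eq_square algebra_simps)
    have "k * (k * t\<^sup>2 - 4 * lam * M * t + a * eps * lam) = (k * t - 2 * lam * M)\<^sup>2 + (k * a * eps * lam - 4 * lam\<^sup>2 * M\<^sup>2)"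
      by (simp add: power2_eq_square algebra_simps)
    also have "\<dots> \<ge> 0" using q by simp
    finally show ?thesis using kp by (simp add: zero_le_mult_iff)
  qed
  have "(2 * M * t + L / 2 * t\<^sup>2 - a * t\<^sup>2 / (2 * lam)) * (2 * lam) = 4 * lam * M * t - k * t\<^sup>2"
    using lam unfolding k_def by (simp add: field_simps)
  also have "\<dots> \<le> a * eps * lam" using main by simp
  also have "\<dots> = a * eps / 2 * (2 * lam)" by simp
  finally show ?thesis using lam by (simp add: mult_le_cancel_right)
qed



locale ucs =
  fixes f h :: "'a::euclidean_space \<Rightarrow> ereal" and f' :: "'a \<Rightarrow> 'a"
    and Mf Lf chi lam0 eps :: real and x0 :: 'a
  assumes f_proper: "proper_fun f"
    and h_proper: "proper_fun h" and h_lsc: "lsc_fun h" and h_conv: "econvex h"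
    and dom_sub: "edom h \<subseteq> edom f"
    and subgrad: "\<And>x y. x \<in> edom h \<Longrightarrow> f y \<ge> f x + ereal (inner (f' x) (y - x))"
    and Mf_nonneg: "Mf \<ge> 0" and Lf_nonneg: "Lf \<ge> 0"
    and oracle_bound: "\<And>x y. x \<in> edom h \<Longrightarrow> y \<in> edom h \<Longrightarrow>
                         norm (f' x - f' y) \<le> 2 * Mf + Lf * norm (x - y)"
    and x0_dom: "x0 \<in> edom h"
    and chi0: "0 \<le> chi" and chi1: "chi < 1"
    and lam0_pos: "lam0 > 0" and eps_pos: "eps > 0"
begin

definition fr where "fr x = real_of_ereal (f x)"

lemma f_fin: "x \<in> edom h \<Longrightarrow> f x = ereal (fr x)"
  unfolding fr_def using dom_sub proper_finite[OF f_proper] by (auto simp: edom_def)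

lemma h_fin: "x \<in> edom h \<Longrightarrow> h x = ereal (real_of_ereal (h x))"
  using proper_finite[OF h_proper] by (auto simp: edom_def)

lemma sg: "p \<in> edom h \<Longrightarrow> q \<in> edom h \<Longrightarrow> fr q \<ge> fr p + inner (f' p) (q - p)"
  using subgrad[of p q] f_fin[of p] f_fin[of q] by simp

lemma dom_convex:
  assumes "x \<in> edom h" "y \<in> edom h" "0 \<le> s" "s \<le> 1"
  shows "(1 - s) *\<^sub>R x + s *\<^sub>R y \<in> edom h"
proof -
  have "h ((1 - s) *\<^sub>R x + s *\<^sub>R y) \<le> ereal ((1 - s) * real_of_ereal (h x) + s * real_of_ereal (h y))"
    using econvex_le[OF h_conv h_proper, of x _ y _ s] assms h_fin by auto
  then show ?thesis unfolding edom_def using le_less_trans by fastforce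
qed

lemma cs_obj_eq:
  assumes "xc \<in> edom h"
  shows "cs_obj f f' h xc lam u = h u + ereal (fr xc + inner (f' xc) (u - xc) + (norm (u - xc))\<^sup>2 / (2 * lam))"
  using f_fin[OF assms] unfolding cs_obj_def lin_f_def by (cases "h u") (auto simp: add_ac)

lemma prox_props:
  assumes xc: "xc \<in> edom h" and lam: "lam > 0"
  shows "(\<forall>u. cs_obj f f' h xc lam (cs_prox f f' h xc lam) \<le> cs_obj f f' h xc lam u)
    \<and> (\<forall>y. (\<forall>u. cs_obj f f' h xc lam y \<le> cs_obj f f' h xc lam u) \<longrightarrow> y = cs_prox f f' h xc lam)
    \<and> cs_prox f f' h xc lam \<in> edom h"
proof -
  let ?g = "\<lambda>u. fr xc + inner (f' xc) (u - xc) + (norm (u - xc))\<^sup>2 / (2 * lam)"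
  have eq: "cs_obj f f' h xc lam u = h u + ereal (?g u)" for u by (rule cs_obj_eq[OF xc])
  obtain x where x: "\<forall>u. h x + ereal (?g x) \<le> h u + ereal (?g u)"
    using prox_exists[OF h_proper h_lsc h_conv lam] by blast
  have uq: "\<And>y. \<forall>u. h y + ereal (?g y) \<le> h u + ereal (?g u) \<Longrightarrow> y = x"
    using prox_unique[OF h_proper h_conv lam] x by blast
  have ex1: "\<exists>!x. \<forall>u. cs_obj f f' h xc lam x \<le> cs_obj f f' h xc lam u"
    unfolding eq using x uq by blast
  have P: "\<forall>u. cs_obj f f' h xc lam (cs_prox f f' h xc lam) \<le> cs_obj f f' h xc lam u"
    unfolding cs_prox_def by (rule theI'[OF ex1])
  moreover have "\<forall>y. (\<forall>u. cs_obj f f' h xc lam y \<le> cs_obj f f' h xc lam u) \<longrightarrow> y = cs_prox f f' h xc lam"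
    using ex1 P by blast
  moreover have "cs_prox f f' h xc lam \<in> edom h"
    using min_in_dom[OF h_proper, of "cs_prox f f' h xc lam" ?g] P unfolding eq edom_def by blast
  ultimately show ?thesis by blast
qed

lemma gauss_real: "(\<Sum>i<N. real (Suc i)) = real N * (real N + 1) / 2"
  by (induction N) (auto simp: field_simps)

lemma descent:
  assumes xc: "xc \<in> edom h" and x: "x \<in> edom h"
  shows "fr x - fr xc - inner (f' xc) (x - xc) \<le> 2 * Mf * norm (x - xc) + Lf / 2 * (norm (x - xc))\<^sup>2"
proof -
  define d where "d = x - xc"
  define t where "t = norm d"
  define A where "A = fr x - fr xc - inner (f' xc) d"
  define B where "B = 2 * Mf * t + Lf / 2 * t\<^sup>2"
  have bndN: "A \<le> B + Lf * t\<^sup>2 / (2 * real N)" if N: "N > 0" for N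
  proof -
    define p where "p = (\<lambda>i::nat. xc + (real i / real N) *\<^sub>R d)"
    have pin: "p i \<in> edom h" if "i \<le> N" for i
    proof -
      have "p i = (1 - real i / real N) *\<^sub>R xc + (real i / real N) *\<^sub>R x"
        unfolding p_def d_def by (simp add: algebra_simps)
      moreover have "real i / real N \<le> 1" using that N by simp
      ultimately show ?thesis using dom_convex[OF xc x] by simp
    qed
    have pN: "p N = x" using N unfolding p_def d_def by simp
    have p0: "p 0 = xc" unfolding p_def by simp
    have step: "fr (p (Suc i)) - fr (p i) \<le> inner (f' (p (Suc i))) d / real N" if "i < N" for i
    proof -
      have "fr (p i) \<ge> fr (p (Suc i)) + inner (f' (p (Suc i))) (p i - p (Suc i))"
        using sg[OF pin pin] that by simp
      moreover have "p i - p (Suc i) = - (1 / real N) *\<^sub>R d"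
        unfolding p_def by (simp add: algebra_simps add_divide_distrib flip: scaleR_add_left)
      ultimately show ?thesis by (simp add: inner_diff_right)
    qed
    have bnd: "inner (f' (p (Suc i)) - f' xc) d \<le> (2 * Mf + Lf * (real (Suc i) / real N * t)) * t"
      if "i < N" for i
    proof -
      have "inner (f' (p (Suc i)) - f' xc) d \<le> norm (f' (p (Suc i)) - f' xc) * t"
        unfolding t_def by (rule norm_cauchy_schwarz)
      also have "\<dots> \<le> (2 * Mf + Lf * norm (p (Suc i) - xc)) * t"
        using oracle_bound[OF pin xc, of "Suc i"] that unfolding t_def
        by (intro mult_right_mono) auto
      also have "norm (p (Suc i) - xc) = real (Suc i) / real N * t"
        unfolding p_def t_def by simp
      finally show ?thesis .
    qed
    have "fr x - fr xc = (\<Sum>i<N. fr (p (Suc i)) - fr (p i))"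
      using sum_lessThan_telescope[of "\<lambda>i. fr (p i)" N] pN p0 by simp
    moreover have "inner (f' xc) d = (\<Sum>i<N. inner (f' xc) d / real N)" using N by simp
    ultimately have "A = (\<Sum>i<N. fr (p (Suc i)) - fr (p i) - inner (f' xc) d / real N)"
      unfolding A_def by (simp add: sum_subtractf)
    also have "\<dots> \<le> (\<Sum>i<N. inner (f' (p (Suc i)) - f' xc) d / real N)"
      using step by (intro sum_mono) (auto simp: inner_diff_left diff_divide_distrib)
    also have "\<dots> \<le> (\<Sum>i<N. (2 * Mf + Lf * (real (Suc i) / real N * t)) * t / real N)"
      using bnd by (intro sum_mono divide_right_mono) auto
    also have "\<dots> = (\<Sum>i<N. 2 * Mf * t / real N + (Lf * t\<^sup>2 / (real N)\<^sup>2) * real (Suc i))"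
      by (rule sum.cong) (simp_all add: field_simps power2_eq_square)
    also have "\<dots> = real N * (2 * Mf * t / real N) + (Lf * t\<^sup>2 / (real N)\<^sup>2) * (\<Sum>i<N. real (Suc i))"
      by (simp only: sum.distrib sum_distrib_left[symmetric] sum_constant card_lessThan)
    also have "\<dots> = B + Lf * t\<^sup>2 / (2 * real N)"
      unfolding gauss_real B_def using N by (simp add: field_simps power2_eq_square)
    finally show ?thesis .
  qed
  have "A \<le> B"
  proof (rule ccontr)
    assume "\<not> A \<le> B"
    then have del: "A - B > 0" by simp
    obtain N :: nat where N: "real N > Lf * t\<^sup>2 / (2 * (A - B))" using reals_Archimedean2 by blast
    have "Lf * t\<^sup>2 / (2 * (A - B)) \<ge> 0" using del Lf_nonneg by simp
    then have Np: "N > 0" using N by linarith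
    have "Lf * t\<^sup>2 < real N * (2 * (A - B))" using N del by (simp add: field_simps)
    then have "Lf * t\<^sup>2 / (2 * real N) < A - B" using Np by (simp add: field_simps)
    then show False using bndN[OF Np] by simp
  qed
  then show ?thesis unfolding A_def B_def t_def d_def .
qed

lemma test_real:
  assumes "xc \<in> edom h" "x \<in> edom h"
  shows "ucs_test f f' chi eps xc lam x \<longleftrightarrow>
    fr x - (fr xc + inner (f' xc) (x - xc)) - (1 - chi) * (norm (x - xc))\<^sup>2 / (2 * lam) \<le> (1 - chi) * eps / 2"
  unfolding ucs_test_def lin_f_def using f_fin[OF assms(1)] f_fin[OF assms(2)] by simp

lemma test_suff:
  assumes xc: "xc \<in> edom h" and x: "x \<in> edom h" and lam: "lam > 0"
    and c: "lam * (4 * Mf\<^sup>2 + eps * Lf) \<le> (1 - chi)\<^sup>2 * eps"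
  shows "ucs_test f f' chi eps xc lam x"
proof -
  have "fr x - (fr xc + inner (f' xc) (x - xc)) - (1 - chi) * (norm (x - xc))\<^sup>2 / (2 * lam)
      \<le> 2 * Mf * norm (x - xc) + Lf / 2 * (norm (x - xc))\<^sup>2 - (1 - chi) * (norm (x - xc))\<^sup>2 / (2 * lam)"
    using descent[OF xc x] by simp
  also have "\<dots> \<le> (1 - chi) * eps / 2"
    by (rule quad_bound) (use chi0 chi1 lam eps_pos Mf_nonneg Lf_nonneg c in auto)
  finally show ?thesis using test_real[OF xc x] by simp
qed

definition ucs_step :: "nat \<times> real \<times> 'a \<Rightarrow> nat \<times> real \<times> 'a" where
  "ucs_step s = (case s of (k, lam, xc) \<Rightarrow>
     if ucs_test f f' chi eps xc lam (cs_prox f f' h xc lam) then (Suc k, lam, cs_prox f f' h xc lam)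
     else (k, lam / 2, xc))"

definition sq :: "nat \<Rightarrow> nat \<times> real \<times> 'a" where
  "sq n = (ucs_step ^^ n) (0, lam0, x0)"

lemma sq_0: "sq 0 = (0, lam0, x0)" by (simp add: sq_def)
lemma sq_Suc: "sq (Suc n) = ucs_step (sq n)" by (simp add: sq_def)

lemma reach_sq:
  assumes "ucs_reach f f' h x0 chi lam0 eps k lam xc"
  shows "\<exists>n. sq n = (k, lam, xc)"
  using assms
proof (induction rule: ucs_reach.induct)
  case init then show ?case using sq_0 by blast
next
  case (halve k lam xc)
  then obtain n where "sq n = (k, lam, xc)" by blast
  then have "sq (Suc n) = (k, lam / 2, xc)" using halve(3) by (simp add: sq_Suc ucs_step_def)
  then show ?case by blast
next
  case (accept k lam xc)
  then obtain n where "sq n = (k, lam, xc)" by blast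
  then have "sq (Suc n) = (Suc k, lam, cs_prox f f' h xc lam)" using accept(3) by (simp add: sq_Suc ucs_step_def)
  then show ?case by blast
qed

abbreviation "LL \<equiv> lam_lower chi eps Mf Lf lam0"

lemma LL_le: "LL \<le> lam0" unfolding lam_lower_def by auto

lemma inv: "fst (snd (sq n)) > 0 \<and> snd (snd (sq n)) \<in> edom h \<and> LL \<le> fst (snd (sq n))"
proof (induction n)
  case 0 then show ?case using sq_0 lam0_pos x0_dom LL_le by simp
next
  case (Suc n)
  obtain k lam xc where s: "sq n = (k, lam, xc)" by (cases "sq n") auto
  have lam: "lam > 0" and xc: "xc \<in> edom h" and lL: "LL \<le> lam" using Suc s by auto
  show ?case
  proof (cases "ucs_test f f' chi eps xc lam (cs_prox f f' h xc lam)")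
    case True
    then show ?thesis using s lam xc lL prox_props[OF xc lam] by (simp add: sq_Suc ucs_step_def)
  next
    case False
    have px: "cs_prox f f' h xc lam \<in> edom h" using prox_props[OF xc lam] by blast
    have gt: "lam * (4 * Mf\<^sup>2 + eps * Lf) > (1 - chi)\<^sup>2 * eps"
      using False test_suff[OF xc px lam] by linarith
    have ap: "(1 - chi)\<^sup>2 * eps > 0" using chi1 eps_pos by simp
    have D: "8 * Mf\<^sup>2 + 2 * eps * Lf > 0"
    proof -
      have "4 * Mf\<^sup>2 + eps * Lf \<ge> 0" using eps_pos Lf_nonneg by simp
      moreover have "4 * Mf\<^sup>2 + eps * Lf \<noteq> 0" using gt ap by auto
      ultimately show ?thesis by simp
    qed
    have "(1 - chi)\<^sup>2 * eps / (8 * Mf\<^sup>2 + 2 * eps * Lf) \<le> lam / 2"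
      using gt D by (simp add: field_simps)
    moreover have "LL \<le> (1 - chi)\<^sup>2 * eps / (8 * Mf\<^sup>2 + 2 * eps * Lf)"
      unfolding lam_lower_def using D by simp
    ultimately have "LL \<le> lam / 2" by linarith
    then show ?thesis using False s lam xc by (simp add: sq_Suc ucs_step_def)
  qed
qed

lemma lev_mono: "fst (sq n) \<le> fst (sq (Suc n))"
  by (cases "sq n") (auto simp: sq_Suc ucs_step_def)

lemma lam_mono: "fst (snd (sq (Suc n))) \<le> fst (snd (sq n))"
  using inv[of n] by (cases "sq n") (auto simp: sq_Suc ucs_step_def)

lemma lev_mono': "n \<le> m \<Longrightarrow> fst (sq n) \<le> fst (sq m)"
  by (rule lift_Suc_mono_le[of "\<lambda>n. fst (sq n)"]) (use lev_mono in auto)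

lemma lam_mono': "n \<le> m \<Longrightarrow> fst (snd (sq m)) \<le> fst (snd (sq n))"
  by (rule lift_Suc_antimono_le[of "\<lambda>n. fst (snd (sq n))"]) (use lam_mono in auto)

lemma same_lev: "n \<le> m \<Longrightarrow> fst (sq n) = fst (sq m) \<Longrightarrow> snd (snd (sq n)) = snd (snd (sq m))"
proof (induction m rule: dec_induct)
  case base then show ?case by simp
next
  case (step m)
  have "fst (sq n) \<le> fst (sq m)" using lev_mono' step(1) .
  moreover have "fst (sq m) \<le> fst (sq (Suc m))" by (rule lev_mono)
  ultimately have e: "fst (sq m) = fst (sq (Suc m))" using step(4) by simp
  then have "snd (snd (sq (Suc m))) = snd (snd (sq m))"
    by (cases "sq m") (auto simp: sq_Suc ucs_step_def split: if_splits)
  then show ?case using step e by simp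
qed

lemma final_props:
  assumes xp: "xp \<in> edom h" and lam: "lam > 0"
    and tst: "ucs_test f f' chi eps xp lam (cs_prox f f' h xp lam)"
    and xk: "xk = cs_prox f f' h xp lam"
  shows "(\<forall>u. cs_obj f f' h xp lam xk \<le> cs_obj f f' h xp lam u)
      \<and> (\<forall>y. (\<forall>u. cs_obj f f' h xp lam y \<le> cs_obj f f' h xp lam u) \<longrightarrow> y = xk)
      \<and> f xk - lin_f f f' xk xp + ereal ((chi - 1) / (2 * lam) * (norm (xk - xp))\<^sup>2)
          \<le> ereal ((1 - chi) * eps / 2)
      \<and> (\<forall>u. lin_f f f' u xp + h u \<le> f u + h u)
      \<and> (f xk + h xk) + ereal (chi / (2 * lam) * (norm (xk - xp))\<^sup>2)
          - (INF u. cs_obj f f' h xp lam u) \<le> ereal ((1 - chi) * eps / 2)"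
proof -
  have P: "\<forall>u. cs_obj f f' h xp lam xk \<le> cs_obj f f' h xp lam u"
    and U: "\<forall>y. (\<forall>u. cs_obj f f' h xp lam y \<le> cs_obj f f' h xp lam u) \<longrightarrow> y = xk"
    and xkd: "xk \<in> edom h"
    using prox_props[OF xp lam] xk by auto
  have T: "fr xk - (fr xp + inner (f' xp) (xk - xp)) - (1 - chi) * (norm (xk - xp))\<^sup>2 / (2 * lam)
      \<le> (1 - chi) * eps / 2"
    using tst test_real[OF xp xkd] xk by simp
  define hk where "hk = real_of_ereal (h xk)"
  have hk: "h xk = ereal hk" using h_fin[OF xkd] hk_def by simp
  have fk: "f xk = ereal (fr xk)" using f_fin[OF xkd] .
  have fp: "f xp = ereal (fr xp)" using f_fin[OF xp] .
  have lk: "lin_f f f' xk xp = ereal (fr xp + inner (f' xp) (xk - xp))"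
    unfolding lin_f_def fp by simp
  have c3: "f xk - lin_f f f' xk xp + ereal ((chi - 1) / (2 * lam) * (norm (xk - xp))\<^sup>2)
          \<le> ereal ((1 - chi) * eps / 2)"
  proof -
    have "(chi - 1) / (2 * lam) * (norm (xk - xp))\<^sup>2 = - ((1 - chi) * (norm (xk - xp))\<^sup>2 / (2 * lam))"
      by (simp add: field_split_simps)
    then show ?thesis unfolding fk lk using T by (simp add: minus_ereal_def)
  qed
  have c4: "\<forall>u. lin_f f f' u xp + h u \<le> f u + h u"
  proof
    fix u
    have "lin_f f f' u xp \<le> f u" unfolding lin_f_def using subgrad[OF xp] .
    then show "lin_f f f' u xp + h u \<le> f u + h u" by (rule add_right_mono)
  qed
  have inf: "(INF u. cs_obj f f' h xp lam u) = cs_obj f f' h xp lam xk"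
    using P by (intro antisym INF_lower2[of xk] INF_greatest) auto
  have ob: "cs_obj f f' h xp lam xk = ereal (hk + (fr xp + inner (f' xp) (xk - xp) + (norm (xk - xp))\<^sup>2 / (2 * lam)))"
    unfolding cs_obj_eq[OF xp] hk by simp
  have c5: "(f xk + h xk) + ereal (chi / (2 * lam) * (norm (xk - xp))\<^sup>2)
          - (INF u. cs_obj f f' h xp lam u) \<le> ereal ((1 - chi) * eps / 2)"
  proof -
    have e: "fr xk + hk + chi / (2 * lam) * (norm (xk - xp))\<^sup>2 - (hk + (fr xp + inner (f' xp) (xk - xp) + (norm (xk - xp))\<^sup>2 / (2 * lam)))
       = fr xk - (fr xp + inner (f' xp) (xk - xp)) - (1 - chi) * (norm (xk - xp))\<^sup>2 / (2 * lam)"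
      by (simp add: field_split_simps)
    show ?thesis unfolding inf ob fk hk using T e by simp
  qed
  show ?thesis using P U c3 c4 c5 by blast
qed

end

theorem proposition4p1:
  fixes f h :: "'a::euclidean_space \<Rightarrow> ereal"
    and f' :: "'a \<Rightarrow> 'a"
    and Mf Lf chi lam0 eps :: real
    and x0 :: 'a
  assumes f_proper: "proper_fun f" and f_lsc: "lsc_fun f" and f_conv: "econvex f"
    and h_proper: "proper_fun h" and h_lsc: "lsc_fun h" and h_conv: "econvex h"
    and dom_sub: "edom h \<subseteq> edom f"
    and min_attained: "\<exists>xs. \<forall>x. f xs + h xs \<le> f x + h x"
    and subgrad: "\<And>x y. x \<in> edom h \<Longrightarrow> f y \<ge> f x + ereal (inner (f' x) (y - x))"
    and Mf_nonneg: "Mf \<ge> 0" and Lf_nonneg: "Lf \<ge> 0"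
    and oracle_bound: "\<And>x y. x \<in> edom h \<Longrightarrow> y \<in> edom h \<Longrightarrow>
                         norm (f' x - f' y) \<le> 2 * Mf + Lf * norm (x - y)"
    and x0_dom: "x0 \<in> edom h"
    and chi: "0 \<le> chi" "chi < 1"
    and lam0_pos: "lam0 > 0" and eps_pos: "eps > 0"
  shows
    \<comment> \<open>(a) lambda_k non-increasing\<close>
    "(\<forall>k lam lam' x x'. ucs_gen f f' h x0 chi lam0 eps k lam x \<and>
         ucs_gen f f' h x0 chi lam0 eps (Suc k) lam' x' \<longrightarrow> lam' \<le> lam)
     \<and>
    \<comment> \<open>(b) and (c), for every generated iterate k >= 1\<close>
     (\<forall>k lamp xp lamk xk. ucs_gen f f' h x0 chi lam0 eps k lamp xp \<and>
         ucs_gen f f' h x0 chi lam0 eps (Suc k) lamk xk \<longrightarrow>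
        (\<forall>u. cs_obj f f' h xp lamk xk \<le> cs_obj f f' h xp lamk u)
      \<and> (\<forall>y. (\<forall>u. cs_obj f f' h xp lamk y \<le> cs_obj f f' h xp lamk u) \<longrightarrow> y = xk)
      \<and> f xk - lin_f f f' xk xp + ereal ((chi - 1) / (2 * lamk) * (norm (xk - xp))\<^sup>2)
          \<le> ereal ((1 - chi) * eps / 2)
      \<and> lamk \<ge> lam_lower chi eps Mf Lf lam0
      \<and> (\<forall>u. lin_f f f' u xp + h u \<le> f u + h u)
      \<and> (f xk + h xk) + ereal (chi / (2 * lamk) * (norm (xk - xp))\<^sup>2)
          - (INF u. cs_obj f f' h xp lamk u) \<le> ereal ((1 - chi) * eps / 2))"
proof -
  interpret U: ucs f h f' Mf Lf chi lam0 eps x0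
    by (unfold_locales) (use assms in auto)
  \<comment> \<open>key structural fact: the state from which iterate k+1 is produced sits after the
      state producing iterate k, and shares its prox centre\<close>
  have gen0: "\<exists>q. (k = 0 \<and> U.sq q = (0, lam0, x0) \<and> lam = lam0 \<and> x = x0) \<or>
      (fst (U.sq q) = k \<and> fst (snd (U.sq q)) = lam \<and> snd (snd (U.sq q)) = x \<and> 0 < k)"
    if g: "ucs_gen f f' h x0 chi lam0 eps k lam x" for k lam x
  proof -
    from g consider "k = 0 \<and> lam = lam0 \<and> x = x0"
      | j xc where "k = Suc j" "ucs_reach f f' h x0 chi lam0 eps j lam xc"
        "ucs_test f f' chi eps xc lam (cs_prox f f' h xc lam)" "x = cs_prox f f' h xc lam"
      unfolding ucs_gen_def by blast
    then show ?thesis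
    proof cases
      case 1 then show ?thesis using U.sq_0 by blast
    next
      case (2 j xc)
      obtain n where n: "U.sq n = (j, lam, xc)" using U.reach_sq[OF 2(2)] by blast
      have "U.sq (Suc n) = (Suc j, lam, x)" using n 2 by (simp add: U.sq_Suc U.ucs_step_def)
      then show ?thesis using 2 by (intro exI[of _ "Suc n"]) simp
    qed
  qed
  have nxt: "\<exists>b xc. U.sq b = (k, lam', xc) \<and> ucs_test f f' chi eps xc lam' (cs_prox f f' h xc lam')
      \<and> x' = cs_prox f f' h xc lam'"
    if g: "ucs_gen f f' h x0 chi lam0 eps (Suc k) lam' x'" for k lam' x'
  proof -
    from g obtain xc where "ucs_reach f f' h x0 chi lam0 eps k lam' xc"
        "ucs_test f f' chi eps xc lam' (cs_prox f f' h xc lam')" "x' = cs_prox f f' h xc lam'"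
      unfolding ucs_gen_def by auto
    moreover obtain n where "U.sq n = (k, lam', xc)" using U.reach_sq[OF calculation(1)] by blast
    ultimately show ?thesis by blast
  qed
  have comb: "\<exists>b xc. U.sq b = (k, lam', xc) \<and> lam' \<le> lam \<and> xc = x \<and>
      ucs_test f f' chi eps xc lam' (cs_prox f f' h xc lam') \<and> x' = cs_prox f f' h xc lam'"
    if g1: "ucs_gen f f' h x0 chi lam0 eps k lam x" and g2: "ucs_gen f f' h x0 chi lam0 eps (Suc k) lam' x'"
    for k lam x lam' x'
  proof -
    obtain b xc where b: "U.sq b = (k, lam', xc)" "ucs_test f f' chi eps xc lam' (cs_prox f f' h xc lam')"
      "x' = cs_prox f f' h xc lam'" using nxt[OF g2] by blast
    obtain q where q: "(k = 0 \<and> U.sq q = (0, lam0, x0) \<and> lam = lam0 \<and> x = x0) \<or>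
      (fst (U.sq q) = k \<and> fst (snd (U.sq q)) = lam \<and> snd (snd (U.sq q)) = x \<and> 0 < k)"
      using gen0[OF g1] by blast
    have "q \<le> b"
    proof (rule ccontr)
      assume "\<not> q \<le> b"
      then have "Suc b \<le> q" by simp
      then have le: "fst (U.sq (Suc b)) \<le> fst (U.sq q)" by (rule U.lev_mono')
      show False
      proof (cases "k = 0 \<and> U.sq q = (0, lam0, x0) \<and> lam = lam0 \<and> x = x0")
        case True
        then have "U.sq q = U.sq 0" using U.sq_0 by simp
        have "fst (U.sq 0) \<le> fst (U.sq b)" by (rule U.lev_mono') simp
        then show False using \<open>Suc b \<le> q\<close> True le b
          by (cases b) (auto simp: U.sq_Suc U.ucs_step_def U.sq_0 split: if_splits)
      next
        case False
        then have qk: "fst (U.sq q) = k" using q by blast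
        have "fst (U.sq (Suc b)) = Suc k" using b by (simp add: U.sq_Suc U.ucs_step_def)
        then show False using le qk by simp
      qed
    qed
    have lq: "fst (U.sq q) = k" "fst (snd (U.sq q)) = lam" "snd (snd (U.sq q)) = x"
    proof -
      show "fst (U.sq q) = k" "fst (snd (U.sq q)) = lam" "snd (snd (U.sq q)) = x"
        using q by auto
    qed
    have "lam' \<le> lam" using U.lam_mono'[OF \<open>q \<le> b\<close>] b lq by simp
    moreover have "xc = x" using U.same_lev[OF \<open>q \<le> b\<close>] b lq by simp
    ultimately show ?thesis using b by blast
  qed
  show ?thesis
  proof (rule conjI; intro allI impI)
    fix k lam lam' x x'
    assume "ucs_gen f f' h x0 chi lam0 eps k lam x \<and> ucs_gen f f' h x0 chi lam0 eps (Suc k) lam' x'"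
    then show "lam' \<le> lam" using comb by blast
  next
    fix k lamp xp lamk xk
    assume "ucs_gen f f' h x0 chi lam0 eps k lamp xp \<and> ucs_gen f f' h x0 chi lam0 eps (Suc k) lamk xk"
    then obtain b where b: "U.sq b = (k, lamk, xp)" "ucs_test f f' chi eps xp lamk (cs_prox f f' h xp lamk)"
      "xk = cs_prox f f' h xp lamk" using comb by blast
    have iv: "lamk > 0" "xp \<in> edom h" "lam_lower chi eps Mf Lf lam0 \<le> lamk" using U.inv[of b] b by auto
    show "(\<forall>u. cs_obj f f' h xp lamk xk \<le> cs_obj f f' h xp lamk u)
      \<and> (\<forall>y. (\<forall>u. cs_obj f f' h xp lamk y \<le> cs_obj f f' h xp lamk u) \<longrightarrow> y = xk)
      \<and> f xk - lin_f f f' xk xp + ereal ((chi - 1) / (2 * lamk) * (norm (xk - xp))\<^sup>2)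
          \<le> ereal ((1 - chi) * eps / 2)
      \<and> lamk \<ge> lam_lower chi eps Mf Lf lam0
      \<and> (\<forall>u. lin_f f f' u xp + h u \<le> f u + h u)
      \<and> (f xk + h xk) + ereal (chi / (2 * lamk) * (norm (xk - xp))\<^sup>2)
          - (INF u. cs_obj f f' h xp lamk u) \<le> ereal ((1 - chi) * eps / 2)"
      using U.final_props[OF iv(2) iv(1) b(2) b(3)] iv(3) by blast
  qed
qed

end
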